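(* Let $p$ be a prime number and let $x,y,z\in\mathbb{N}$ with $x\le y\le z$ satisfy $\frac{4}{p}=\frac{1}{x}+\frac{1}{y}+\frac{1}{z}$. Then $\gcd(y,p^2)\ne p^2$ and $\gcd(z,p^2)\ne p^2$.
   Context: $\mathbb{N}$ denotes the positive integers. *)

theory Defs
  imports Complex_Main "HOL-Computational_Algebra.Primes"
begin

end

theory Submission
  imports Defs
begin

lemma key_eq:
  fixes p x y z :: nat
  assumes "p > 0" "x > 0" "y > 0" "z > 0"
    and "(4::real) / real p = 1 / real x + 1 / real y + 1 / real z"
  shows "4*x*y*z = p*(x*y+y*z+z*x)"
proof -
  have "real (4*x*y*z) = real (p*(x*y+y*z+z*x))"
    using assms by (simp add: field_simps)
  then show ?thesis by linarith
qed

lemma x_bounds: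
  fixes p x y z :: nat
  assumes "p > 0" "x > 0" "y > 0" "z > 0" "x \<le> y" "y \<le> z"
    and e: "4*x*y*z = p*(x*y+y*z+z*x)"
  shows "4*x \<le> 3*p" "p < 4*x"
proof -
  have a: "x*y \<le> y*z" "z*x \<le> y*z" using assms by (auto simp: mult_mono)
  have "x*y+y*z+z*x \<le> 3*(y*z)" using a by linarith
  then have "p*(x*y+y*z+z*x) \<le> p*(3*(y*z))" by simp
  then have "(4*x)*(y*z) \<le> (3*p)*(y*z)" using e by (simp add: ac_simps)
  then show "4*x \<le> 3*p" using assms by simp
  have "y*z < x*y+y*z+z*x" using assms by simp
  then have "p*(y*z) < p*(x*y+y*z+z*x)" using assms by simp
  then have "p*(y*z) < (4*x)*(y*z)" using e by (simp add: ac_simps)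
  then show "p < 4*x" by simp
qed

lemma both_sq:
  fixes p x y z :: nat
  assumes "prime p" "x > 0" "x < p"
    and e: "4*x*y*z = p*(x*y+y*z+z*x)"
    and h: "p^2 dvd y \<or> p^2 dvd z"
  shows "p^2 dvd y \<and> p^2 dvd z"
proof -
  have p0: "p > 0" using assms prime_gt_0_nat by auto
  have px: "\<not> p dvd x" using assms by (auto dest: dvd_imp_le)
  have cop1: "coprime p x" using px assms by (simp add: prime_imp_coprime)
  have cop2: "coprime (p^2) x" using cop1 by simp
  let ?S = "x*y+y*z+z*x"
  have X: "p^(k+1) dvd ?S" if "p^(k+2) dvd x*y*z" for k
  proof -
    have "p^(k+2) dvd 4*x*y*z" using that
      by (metis dvd_mult2 mult.assoc mult.commute)
    then have "p*p^(k+1) dvd p*?S" using e by simp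
    then show ?thesis using p0 by simp
  qed
  show ?thesis using h
  proof
    assume yy: "p^2 dvd y"
    have "x*y*z = y*(x*z)" by (simp add: ac_simps)
    then have "p^(0+2) dvd x*y*z" using yy by (metis add_0 dvd_mult2)
    then have "p dvd ?S" using X[of 0] by simp
    moreover have "p dvd x*y + y*z"
    proof -
      have "p dvd y" using yy by (metis dvd_trans dvd_triv_left power2_eq_square)
      then show ?thesis by (intro dvd_add dvd_mult dvd_mult2)
    qed
    ultimately have "p dvd z*x" by (simp add: dvd_add_right_iff)
    then have pz: "p dvd z" using cop1 by (simp add: coprime_dvd_mult_left_iff)
    have "p^(1+2) dvd x*y*z"
    proof -
      have "p^2*p dvd y*z" using yy pz by (rule mult_dvd_mono)
      moreover have "p^(1+2) = p^2*p" "x*y*z = (y*z)*x" by (simp_all add: power_Suc power2_eq_square ac_simps)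
      ultimately show ?thesis by (metis dvd_mult2)
    qed
    then have "p^2 dvd ?S" using X[of 1] by (simp add: power2_eq_square)
    moreover have "p^2 dvd x*y + y*z" using yy by (intro dvd_add dvd_mult dvd_mult2)
    ultimately have "p^2 dvd z*x" by (simp add: dvd_add_right_iff)
    then have "p^2 dvd z" using cop2 by (simp add: coprime_dvd_mult_left_iff)
    then show ?thesis using yy by simp
  next
    assume zz: "p^2 dvd z"
    have "x*y*z = z*(x*y)" by (simp add: ac_simps)
    then have "p^(0+2) dvd x*y*z" using zz by (metis add_0 dvd_mult2)
    then have "p dvd ?S" using X[of 0] by simp
    moreover have "p dvd y*z+z*x"
    proof -
      have "p dvd z" using zz by (metis dvd_trans dvd_triv_left power2_eq_square)
      then show ?thesis by (intro dvd_add dvd_mult dvd_mult2)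
    qed
    ultimately have "p dvd x*y" by (metis add.assoc dvd_add_left_iff)
    then have py: "p dvd y" using cop1 by (simp add: coprime_dvd_mult_right_iff)
    have "p^(1+2) dvd x*y*z"
    proof -
      have "p*p^2 dvd y*z" using py zz by (rule mult_dvd_mono)
      moreover have "p^(1+2) = p*p^2" "x*y*z = (y*z)*x" by (simp_all add: power_Suc power2_eq_square ac_simps)
      ultimately show ?thesis by (metis dvd_mult2)
    qed
    then have "p^2 dvd ?S" using X[of 1] by (simp add: power2_eq_square)
    moreover have "p^2 dvd y*z+z*x" using zz by (intro dvd_add dvd_mult dvd_mult2)
    ultimately have "p^2 dvd x*y" by (metis add.assoc dvd_add_left_iff)
    then have "p^2 dvd y" using cop2 by (simp add: coprime_dvd_mult_right_iff)
    then show ?thesis using zz by simp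
  qed
qed

lemma final_contra:
  fixes p x Y Z d :: nat
  assumes p2: "p \<ge> 2" and xp: "x < p" and Y0: "Y > 0" and YZ: "Y \<le> Z"
    and d: "4*x = p + d" "d \<ge> 1"
    and e: "p*Y*Z*(4*x) = p*Y*Z*p + x*(Y+Z)"
  shows False
proof -
  have e2: "d*p*Y*Z = x*(Y+Z)" using e d(1) by (simp add: algebra_simps)
  have "x*(Y+Z) \<le> x*(2*Z)" using YZ by simp
  also have "... < p*(2*Z)" using xp YZ Y0 by simp
  finally have "(d*Y)*(p*Z) < 2*(p*Z)" using e2 by (simp add: ac_simps)
  then have "d*Y < 2" by simp
  moreover have "d \<le> d*Y" "Y \<le> d*Y" using d Y0 by simp_all
  ultimately have d1: "d = 1" "Y = 1" using d Y0 by linarith+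
  have "p*Z = x*(1+Z)" using e2 d1 by simp
  then have "4*(p*Z) = (p+1)*(1+Z)" using d d1 by (metis mult.assoc)
  then have "3*(p*Z) = p + 1 + Z" by (simp add: algebra_simps)
  moreover have "p*Z \<ge> p" "p*Z \<ge> 2*Z" using Y0 YZ p2 by auto
  moreover have "Z \<ge> 1" using Y0 YZ by simp
  ultimately show False by linarith
qed

theorem lemma3:
  fixes p x y z :: nat
  assumes "prime p"
    and "x > 0" and "y > 0" and "z > 0"
    and "x \<le> y" and "y \<le> z"
    and "(4::real) / real p = 1 / real x + 1 / real y + 1 / real z"
  shows "gcd y (p^2) \<noteq> p^2 \<and> gcd z (p^2) \<noteq> p^2"
proof (rule ccontr)
  assume "\<not> ?thesis"
  then have h: "p^2 dvd y \<or> p^2 dvd z" by (metis gcd_nat.absorb_iff2 gcd.commute)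
  have p2: "p \<ge> 2" using assms(1) prime_ge_2_nat by auto
  have e: "4*x*y*z = p*(x*y+y*z+z*x)" using key_eq assms p2 by simp
  have b: "4*x \<le> 3*p" "p < 4*x" using x_bounds[OF _ _ _ _ _ _ e] assms p2 by auto
  have xp: "x < p" using b by linarith
  have "p^2 dvd y \<and> p^2 dvd z" using both_sq[OF assms(1) assms(2) xp e h] .
  then obtain Y Z where Y: "y = p^2*Y" and Z: "z = p^2*Z" by (auto elim!: dvdE)
  have Y0: "Y > 0" using Y assms by auto
  have YZ: "Y \<le> Z" using Y Z assms p2 by simp
  obtain d where d: "4*x = p + d" "d \<ge> 1" using b(2) by (metis less_imp_add_positive Suc_le_eq One_nat_def)
  have l: "4*x*y*z = (p*p*p)*(p*Y*Z*(4*x))" unfolding Y Z power2_eq_square by algebra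
  have r: "p*(x*y+y*z+z*x) = (p*p*p)*(p*Y*Z*p + x*(Y+Z))" unfolding Y Z power2_eq_square by algebra
  have "(p*p*p)*(p*Y*Z*(4*x)) = (p*p*p)*(p*Y*Z*p + x*(Y+Z))"
    using e l r by simp
  then have "p*Y*Z*(4*x) = p*Y*Z*p + x*(Y+Z)" using p2 by simp
  then show False using final_contra[OF p2 xp Y0 YZ d] by blast
qed

end
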